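(* Let $1<p<\infty$ and $q=p/(p-1)$. Then for all $u,v\ge0$ and all $\beta\in(0,1)$, $$\min\left\{\frac1{\beta p},\frac1{(1-\beta)q}\right\}\left(\beta u^p+(1-\beta)v^q-u^{\beta p}v^{(1-\beta)q}\right)\le\frac{u^p}{p}+\frac{v^q}{q}-uv\le\max\left\{\frac1{\beta p},\frac1{(1-\beta)q}\right\}\left(\beta u^p+(1-\beta)v^q-u^{\beta p}v^{(1-\beta)q}\right).$$ *)

theory Defs
  imports Complex_Main
begin

end

theory Submission
  imports Defs "HOL-Analysis.Analysis"
begin

lemma amgm:
  fixes x y w :: real
  assumes "0 \<le> x" "0 \<le> y" "0 \<le> w" "w \<le> 1"
  shows "x powr w * y powr (1 - w) \<le> w * x + (1 - w) * y"
proof (cases "x = 0 \<or> y = 0")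
  case True
  then show ?thesis using assms by auto
next
  case False
  then show ?thesis using Youngs_inequality_0[of w "1-w" x y] assms by auto
qed

definition gap :: "real \<Rightarrow> real \<Rightarrow> real \<Rightarrow> real" where
  "gap t a b = t*a + (1-t)*b - a powr t * b powr (1-t)"

lemma gap_nonneg: "0 \<le> a \<Longrightarrow> 0 \<le> b \<Longrightarrow> 0 \<le> t \<Longrightarrow> t \<le> 1 \<Longrightarrow> 0 \<le> gap t a b"
  using amgm[of a b t] by (simp add: gap_def)

lemma gap_swap: "gap t a b = gap (1-t) b a"
  by (simp add: gap_def algebra_simps)

lemma gap_low:
  fixes l m a b :: real
  assumes "0 < l" "l \<le> m" "m < 1" "0 \<le> a" "0 \<le> b"
  shows "(l/m) * gap m a b \<le> gap l a b"
proof -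
  have m0: "0 < m" using assms by auto
  define x where "x = a powr m * b powr (1-m)"
  have x0: "0 \<le> x" unfolding x_def by simp
  have w1: "l/m \<le> 1" using assms m0 by simp
  have w0: "0 \<le> l/m" using assms m0 by simp
  have "x powr (l/m) = (a powr m) powr (l/m) * (b powr (1-m)) powr (l/m)"
    unfolding x_def by (simp add: powr_mult)
  also have "\<dots> = a powr l * b powr ((1-m)*(l/m))"
    using m0 by (simp add: powr_powr)
  finally have xe: "x powr (l/m) = a powr l * b powr ((1-m)*(l/m))" .
  have "x powr (l/m) * b powr (1 - l/m) = a powr l * (b powr ((1-m)*(l/m)) * b powr (1 - l/m))"
    using xe by simp
  also have "b powr ((1-m)*(l/m)) * b powr (1 - l/m) = b powr ((1-m)*(l/m) + (1 - l/m))"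
    by (simp add: powr_add)
  also have "(1-m)*(l/m) + (1 - l/m) = 1 - l"
    using m0 by (simp add: field_simps)
  finally have e: "x powr (l/m) * b powr (1 - l/m) = a powr l * b powr (1 - l)" .
  have "a powr l * b powr (1 - l) \<le> (l/m) * x + (1 - l/m) * b"
    using amgm[OF x0 assms(5) w0 w1] e by simp
  moreover have "(l/m)*gap m a b = l*a + (l/m - l)*b - (l/m)*x"
    unfolding gap_def x_def using m0 by (simp add: field_simps)
  ultimately show ?thesis unfolding gap_def by (simp add: algebra_simps)
qed

lemma gap_up:
  fixes l m a b :: real
  assumes "0 < l" "l \<le> m" "m < 1" "0 \<le> a" "0 \<le> b"
  shows "gap l a b \<le> ((1-l)/(1-m)) * gap m a b"
proof -
  have "((1-m)/(1-l)) * gap (1-l) b a \<le> gap (1-m) b a"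
    using gap_low[of "1-m" "1-l" b a] assms by simp
  then have "((1-m)/(1-l)) * gap l a b \<le> gap m a b"
    by (metis gap_swap diff_diff_cancel)
  moreover have "0 < 1 - m" "0 < 1 - l" using assms by auto
  ultimately show ?thesis by (simp add: field_simps)
qed

lemma both:
  fixes l m a b :: real
  assumes "0 < l" "l < 1" "0 < m" "m < 1" "0 \<le> a" "0 \<le> b"
  shows "min (l/m) ((1-l)/(1-m)) * gap m a b \<le> gap l a b \<and>
         gap l a b \<le> max (l/m) ((1-l)/(1-m)) * gap m a b"
proof -
  have g: "0 \<le> gap m a b" using gap_nonneg assms by auto
  show ?thesis
  proof (cases "l \<le> m")
    case True
    have "min (l/m) ((1-l)/(1-m)) * gap m a b \<le> (l/m) * gap m a b"
      using g by (intro mult_right_mono) auto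
    moreover have "((1-l)/(1-m)) * gap m a b \<le> max (l/m) ((1-l)/(1-m)) * gap m a b"
      using g by (intro mult_right_mono) auto
    ultimately show ?thesis using gap_low[of l m a b] gap_up[of l m a b] True assms by linarith
  next
    case False
    have A: "(1-l)/(1-m) * gap (1-m) b a \<le> gap (1-l) b a"
      using assms False by (intro gap_low[of "1-l" "1-m" b a]) linarith+
    have B: "gap (1-l) b a \<le> ((1-(1-l))/(1-(1-m))) * gap (1-m) b a"
      using assms False by (intro gap_up[of "1-l" "1-m" b a]) linarith+
    have A': "(1-l)/(1-m) * gap m a b \<le> gap l a b"
      using A gap_swap[of m a b] gap_swap[of l a b] by simp
    have B': "gap l a b \<le> (l/m) * gap m a b"
      using B gap_swap[of m a b] gap_swap[of l a b] by simp
    have "min (l/m) ((1-l)/(1-m)) * gap m a b \<le> ((1-l)/(1-m)) * gap m a b"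
      using g by (intro mult_right_mono) auto
    moreover have "(l/m) * gap m a b \<le> max (l/m) ((1-l)/(1-m)) * gap m a b"
      using g by (intro mult_right_mono) auto
    ultimately show ?thesis using A' B' by linarith
  qed
qed

theorem corollary3p1:
  fixes p q u v \<beta> :: real
  assumes "1 < p" and "q = p / (p - 1)"
    and "0 \<le> u" and "0 \<le> v"
    and "0 < \<beta>" and "\<beta> < 1"
  shows "min (1 / (\<beta> * p)) (1 / ((1 - \<beta>) * q)) *
           (\<beta> * u powr p + (1 - \<beta>) * v powr q - u powr (\<beta> * p) * v powr ((1 - \<beta>) * q))
         \<le> u powr p / p + v powr q / q - u * v \<and>
         u powr p / p + v powr q / q - u * v
         \<le> max (1 / (\<beta> * p)) (1 / ((1 - \<beta>) * q)) *
           (\<beta> * u powr p + (1 - \<beta>) * v powr q - u powr (\<beta> * p) * v powr ((1 - \<beta>) * q))"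
proof -
  define a where "a = u powr p"
  define b where "b = v powr q"
  have p0: "0 < p" using assms by simp
  have iq0: "1/q = (p-1)/p" using assms by simp
  have iq: "1/q = 1 - 1/p" using iq0 p0 by (simp add: diff_divide_distrib)
  have q0: "0 < q" using assms by simp
  have c1: "1 / (\<beta> * p) = (1/p)/\<beta>" by simp
  have c2: "1 / ((1 - \<beta>) * q) = (1 - 1/p)/(1-\<beta>)" by (simp flip: iq)
  have ua: "a powr (1/p) = u" unfolding a_def using p0 assms(3) by (simp add: powr_powr)
  have vb: "b powr (1 - 1/p) = v" unfolding b_def using q0 assms(4) iq by (simp add: powr_powr flip: iq)
  have ub: "a powr \<beta> = u powr (\<beta> * p)" unfolding a_def by (simp add: powr_powr mult.commute)
  have vb2: "b powr (1-\<beta>) = v powr ((1 - \<beta>) * q)" unfolding b_def by (simp add: powr_powr mult.commute)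
  have Y: "gap (1/p) a b = u powr p / p + v powr q / q - u * v"
  proof -
    have "gap (1/p) a b = (1/p) * a + (1/q) * b - u * v" unfolding gap_def using ua vb iq by simp
    then show ?thesis by (simp add: a_def b_def)
  qed
  have Z: "gap \<beta> a b = \<beta> * u powr p + (1 - \<beta>) * v powr q - u powr (\<beta> * p) * v powr ((1 - \<beta>) * q)"
    unfolding gap_def using ub vb2 by (simp add: a_def b_def)
  have "0 < 1/p" "1/p < 1" using assms by auto
  moreover have "0 \<le> a" "0 \<le> b" unfolding a_def b_def by simp_all
  ultimately have H: "min ((1/p)/\<beta>) ((1-1/p)/(1-\<beta>)) * gap \<beta> a b \<le> gap (1/p) a b \<and>
         gap (1/p) a b \<le> max ((1/p)/\<beta>) ((1-1/p)/(1-\<beta>)) * gap \<beta> a b"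
    using both[of "1/p" \<beta> a b] assms(5,6) by blast
  show ?thesis using H unfolding c1 c2 Y Z .
qed

end
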